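(* Let $(W,S)$ be a finitely generated Coxeter system and $u<v$ in $W$. The number of elements $u'$ covering $u$ in the interval $[u,v]$ equals $|\mathrm{Des}(v^{S(u)})|$.
   Context: $(W,S)$ is a finitely generated Coxeter system with length function $\ell$. For $w\in W$, $S(w)\subseteq S$ is the set of simple reflections appearing in a (any) reduced expression of $w$, and $\mathrm{Des}(w)=\{s\in S:\ell(ws)<\ell(w)\}$. For $I\subseteq S$, $W_I$ is the parabolic subgroup generated by $I$, $X_I=\{u\in W:\ell(us)>\ell(u)\ \forall s\in I\}$, and every $w\in W$ factors uniquely as $w=w^Iw_I$ with $w^I\in X_I$, $w_I\in W_I$ (parabolic components along $I$). The partial order on $W$: $u\le v$ iff $v_{S(u)}=u$. *)

theory Defs
  imports "HOL-Algebra.Multiplicative_Group"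
begin

definition word_eval :: "('a, 'b) monoid_scheme \<Rightarrow> 'a list \<Rightarrow> 'a" where
  "word_eval G xs = foldr (\<lambda>x y. x \<otimes>\<^bsub>G\<^esub> y) xs \<one>\<^bsub>G\<^esub>"

text \<open>Coxeter relators: the words (s t)^m(s,t) with m(s,t) = ord(st) finite
  (for s = t this is the word s s).\<close>
definition coxeter_relators :: "('a, 'b) monoid_scheme \<Rightarrow> 'a set \<Rightarrow> 'a list set" where
  "coxeter_relators G S =
     {concat (replicate (group.ord G (s \<otimes>\<^bsub>G\<^esub> t)) [s, t]) | s t.
        s \<in> S \<and> t \<in> S \<and> group.ord G (s \<otimes>\<^bsub>G\<^esub> t) \<noteq> 0}"

inductive word_cong :: "'a list set \<Rightarrow> 'a list \<Rightarrow> 'a list \<Rightarrow> bool" for R where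
  wc_refl: "word_cong R xs xs"
| wc_sym: "word_cong R xs ys \<Longrightarrow> word_cong R ys xs"
| wc_trans: "word_cong R xs ys \<Longrightarrow> word_cong R ys zs \<Longrightarrow> word_cong R xs zs"
| wc_rel: "r \<in> R \<Longrightarrow> word_cong R (xs @ r @ ys) (xs @ ys)"

text \<open>(G,S) is a Coxeter system: G is generated by the set S of involutions and
  has the presentation <S | (st)^m(s,t) = 1>, i.e. every word over S representing
  the identity is a consequence of the Coxeter relators.\<close>
definition coxeter_system :: "('a, 'b) monoid_scheme \<Rightarrow> 'a set \<Rightarrow> bool" where
  "coxeter_system G S \<longleftrightarrow> group G \<and> S \<subseteq> carrier G
     \<and> (\<forall>s\<in>S. s \<noteq> \<one>\<^bsub>G\<^esub> \<and> s \<otimes>\<^bsub>G\<^esub> s = \<one>\<^bsub>G\<^esub>)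
     \<and> carrier G = word_eval G ` lists S
     \<and> (\<forall>xs \<in> lists S. word_eval G xs = \<one>\<^bsub>G\<^esub> \<longrightarrow> word_cong (coxeter_relators G S) xs [])"

definition cox_length :: "('a, 'b) monoid_scheme \<Rightarrow> 'a set \<Rightarrow> 'a \<Rightarrow> nat" where
  "cox_length G S w = (LEAST n. \<exists>xs \<in> lists S. length xs = n \<and> word_eval G xs = w)"

definition reduced_word :: "('a, 'b) monoid_scheme \<Rightarrow> 'a set \<Rightarrow> 'a list \<Rightarrow> 'a \<Rightarrow> bool" where
  "reduced_word G S xs w \<longleftrightarrow> xs \<in> lists S \<and> word_eval G xs = w \<and> length xs = cox_length G S w"

definition cox_support :: "('a, 'b) monoid_scheme \<Rightarrow> 'a set \<Rightarrow> 'a \<Rightarrow> 'a set" where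
  "cox_support G S w = \<Union> {set xs | xs. reduced_word G S xs w}"

definition cox_descents :: "('a, 'b) monoid_scheme \<Rightarrow> 'a set \<Rightarrow> 'a \<Rightarrow> 'a set" where
  "cox_descents G S w = {s \<in> S. cox_length G S (w \<otimes>\<^bsub>G\<^esub> s) < cox_length G S w}"

definition parabolic :: "('a, 'b) monoid_scheme \<Rightarrow> 'a set \<Rightarrow> 'a set" where
  "parabolic G I = word_eval G ` lists I"

definition min_reps :: "('a, 'b) monoid_scheme \<Rightarrow> 'a set \<Rightarrow> 'a set \<Rightarrow> 'a set" where
  "min_reps G S I = {u \<in> carrier G. \<forall>s\<in>I. cox_length G S (u \<otimes>\<^bsub>G\<^esub> s) > cox_length G S u}"

text \<open>Parabolic components: w = w^I w_I with w^I in X_I and w_I in W_I.\<close>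
definition par_comp :: "('a, 'b) monoid_scheme \<Rightarrow> 'a set \<Rightarrow> 'a set \<Rightarrow> 'a \<Rightarrow> 'a" where
  "par_comp G S I w = (THE y. y \<in> parabolic G I \<and>
      w \<otimes>\<^bsub>G\<^esub> inv\<^bsub>G\<^esub> y \<in> min_reps G S I)"

definition par_quot :: "('a, 'b) monoid_scheme \<Rightarrow> 'a set \<Rightarrow> 'a set \<Rightarrow> 'a \<Rightarrow> 'a" where
  "par_quot G S I w = w \<otimes>\<^bsub>G\<^esub> inv\<^bsub>G\<^esub> (par_comp G S I w)"

definition cox_le :: "('a, 'b) monoid_scheme \<Rightarrow> 'a set \<Rightarrow> 'a \<Rightarrow> 'a \<Rightarrow> bool" where
  "cox_le G S u v \<longleftrightarrow> u \<in> carrier G \<and> v \<in> carrier G \<and> par_comp G S (cox_support G S u) v = u"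

definition cox_less :: "('a, 'b) monoid_scheme \<Rightarrow> 'a set \<Rightarrow> 'a \<Rightarrow> 'a \<Rightarrow> bool" where
  "cox_less G S u v \<longleftrightarrow> cox_le G S u v \<and> u \<noteq> v"

definition cox_interval :: "('a, 'b) monoid_scheme \<Rightarrow> 'a set \<Rightarrow> 'a \<Rightarrow> 'a \<Rightarrow> 'a set" where
  "cox_interval G S u v = {x. cox_le G S u x \<and> cox_le G S x v}"

definition cox_covers :: "('a, 'b) monoid_scheme \<Rightarrow> 'a set \<Rightarrow> 'a \<Rightarrow> 'a \<Rightarrow> bool" where
  "cox_covers G S x y \<longleftrightarrow> cox_less G S x y \<and> \<not> (\<exists>z. cox_less G S x z \<and> cox_less G S z y)"

end

theory Submission
  imports Defs
begin

primrec tseq :: "('a, 'b) monoid_scheme \<Rightarrow> 'a list \<Rightarrow> 'a list" where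
  "tseq G [] = []"
| "tseq G (s # xs) = s # map (\<lambda>t. s \<otimes>\<^bsub>G\<^esub> t \<otimes>\<^bsub>G\<^esub> s) (tseq G xs)"

lemma length_tseq[simp]: "length (tseq G xs) = length xs"
  by (induction xs) auto

lemma count_distinct: "distinct xs \<Longrightarrow> count_list xs x = (if x \<in> set xs then 1 else 0)"
  by (induction xs) auto

locale cox = group G for G :: "('a, 'b) monoid_scheme" (structure) +
  fixes S :: "'a set"
  assumes S_carr: "S \<subseteq> carrier G"
  and S_ne: "s \<in> S \<Longrightarrow> s \<noteq> \<one>"
  and S_sq: "s \<in> S \<Longrightarrow> s \<otimes> s = \<one>"
  and gen: "carrier G = word_eval G ` lists S"
  and pres: "xs \<in> lists S \<Longrightarrow> word_eval G xs = \<one> \<Longrightarrow> word_cong (coxeter_relators G S) xs []"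

lemma cox_from_sys: "coxeter_system G S \<Longrightarrow> cox G S"
  unfolding coxeter_system_def cox_def cox_axioms_def by blast

context cox
begin

abbreviation ev where "ev \<equiv> word_eval G"
abbreviation len where "len \<equiv> cox_length G S"
abbreviation R where "R \<equiv> coxeter_relators G S"

lemma S_c[simp]: "s \<in> S \<Longrightarrow> s \<in> carrier G" using S_carr by auto

lemma S_inv[simp]: "s \<in> S \<Longrightarrow> inv s = s"
  using S_sq by (simp add: inv_equality)

lemma ev_Nil[simp]: "ev [] = \<one>" by (simp add: word_eval_def)
lemma ev_Cons[simp]: "ev (x # xs) = x \<otimes> ev xs" by (simp add: word_eval_def)

lemma ev_closed[simp]: "xs \<in> lists S \<Longrightarrow> ev xs \<in> carrier G"
  by (induction xs) auto

lemma ev_append: "xs \<in> lists S \<Longrightarrow> ys \<in> lists S \<Longrightarrow> ev (xs @ ys) = ev xs \<otimes> ev ys"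
  by (induction xs) (auto simp: m_assoc)

lemma ev_snoc: "xs \<in> lists S \<Longrightarrow> s \<in> S \<Longrightarrow> ev (xs @ [s]) = ev xs \<otimes> s"
  by (simp add: ev_append)

lemma ev_rev: "xs \<in> lists S \<Longrightarrow> ev (rev xs) = inv (ev xs)"
proof (induction xs)
  case (Cons x xs)
  then have "rev xs \<in> lists S" "x \<in> S" by auto
  then show ?case using Cons by (simp add: ev_snoc inv_mult_group)
qed simp

lemma carrier_ex: "w \<in> carrier G \<Longrightarrow> \<exists>xs\<in>lists S. ev xs = w"
  using gen by auto

lemma len_le: "xs \<in> lists S \<Longrightarrow> len (ev xs) \<le> length xs"
  unfolding cox_length_def by (rule Least_le) blast

lemma len_ex: "w \<in> carrier G \<Longrightarrow> \<exists>xs\<in>lists S. length xs = len w \<and> ev xs = w"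
proof -
  assume "w \<in> carrier G"
  then obtain xs where "xs \<in> lists S" "ev xs = w" using carrier_ex by blast
  then have "\<exists>n. \<exists>xs\<in>lists S. length xs = n \<and> ev xs = w" by blast
  then show ?thesis unfolding cox_length_def by (rule LeastI_ex)
qed

lemma red_ex: "w \<in> carrier G \<Longrightarrow> \<exists>xs. reduced_word G S xs w"
  using len_ex unfolding reduced_word_def by blast

lemma len_one[simp]: "len \<one> = 0"
  using len_le[of "[]"] by simp

lemma len_zero: "w \<in> carrier G \<Longrightarrow> len w = 0 \<Longrightarrow> w = \<one>"
  using len_ex[of w] by auto

lemma len_mult: "a \<in> carrier G \<Longrightarrow> b \<in> carrier G \<Longrightarrow> len (a \<otimes> b) \<le> len a + len b"
proof -
  assume a: "a \<in> carrier G" and b: "b \<in> carrier G"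
  obtain xs where xs: "xs \<in> lists S" "length xs = len a" "ev xs = a" using len_ex[OF a] by blast
  obtain ys where ys: "ys \<in> lists S" "length ys = len b" "ev ys = b" using len_ex[OF b] by blast
  have "len (ev (xs @ ys)) \<le> length (xs @ ys)" using xs ys by (intro len_le) auto
  then show ?thesis using xs ys by (simp add: ev_append)
qed

lemma len_S: "s \<in> S \<Longrightarrow> len s \<le> 1"
  using len_le[of "[s]"] by simp

lemma len_inv: "w \<in> carrier G \<Longrightarrow> len (inv w) = len w"
proof -
  have *: "len (inv w) \<le> len w" if w: "w \<in> carrier G" for w
  proof -
    obtain xs where xs: "xs \<in> lists S" "length xs = len w" "ev xs = w" using len_ex[OF w] by blast
    have "rev xs \<in> lists S" using xs by auto
    then show ?thesis using len_le[of "rev xs"] xs ev_rev[of xs] by simp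
  qed
  assume "w \<in> carrier G" then show ?thesis using *[of w] *[of "inv w"] by simp
qed

lemma tseq_carr: "xs \<in> lists S \<Longrightarrow> set (tseq G xs) \<subseteq> carrier G"
  by (induction xs) auto

definition cj where "cj g t = g \<otimes> t \<otimes> inv g"

lemma tseq_append: "xs \<in> lists S \<Longrightarrow> ys \<in> lists S \<Longrightarrow>
   tseq G (xs @ ys) = tseq G xs @ map (cj (ev xs)) (tseq G ys)"
proof (induction xs)
  case Nil
  have "map (cj \<one>) l = l" if "set l \<subseteq> carrier G" for l
    using that by (induction l) (auto simp: cj_def)
  then have "map (cj \<one>) (tseq G ys) = tseq G ys" using tseq_carr[OF Nil(2)] by blast
  then show ?case by simp
next
  case (Cons x xs)
  have x: "x \<in> S" and xs: "xs \<in> lists S" using Cons by auto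
  have "map (\<lambda>t. x \<otimes> t \<otimes> x) (map (cj (ev xs)) (tseq G ys)) = map (cj (ev (x#xs))) (tseq G ys)"
    unfolding map_map
  proof (rule map_cong[OF refl])
    fix t assume "t \<in> set (tseq G ys)"
    then have tc: "t \<in> carrier G" using tseq_carr[OF Cons(3)] by auto
    have e: "ev xs \<in> carrier G" using xs by simp
    show "((\<lambda>t. x \<otimes> t \<otimes> x) \<circ> cj (ev xs)) t = cj (ev (x # xs)) t"
      using tc e x by (simp add: cj_def m_assoc inv_mult_group)
  qed
  then show ?case using Cons by simp
qed


lemma map_cj_one: "set L \<subseteq> carrier G \<Longrightarrow> map (cj \<one>) L = L"
  by (induction L) (auto simp: cj_def)

lemma map_upt_2: "map f [0..<Suc (Suc n)] = f 0 # f 1 # map (\<lambda>i. f (Suc (Suc i))) [0..<n]"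
proof -
  have "[0..<2 + n] = [0..<2] @ [2..<2+n]" by (rule upt_add_eq_append) simp
  moreover have "[2..<2+n] = map (\<lambda>i. i + 2) [0..<n]" using map_add_upt[of 2 n] by (simp add: add.commute)
  ultimately have "[0..<Suc (Suc n)] = [0, 1] @ map (\<lambda>i. i + 2) [0..<n]"
    by (simp add: upt_rec)
  then show ?thesis by simp
qed

lemma rel_tseq:
  assumes s: "s \<in> S" and t: "t \<in> S"
  shows "tseq G (concat (replicate k [s, t])) = map (\<lambda>i. (s \<otimes> t) [^] i \<otimes> s) [0..<2*k]"
proof (induction k)
  case 0 then show ?case by simp
next
  case (Suc k)
  have c: "s \<otimes> t \<in> carrier G" using s t by simp
  have "\<And>i. s \<otimes> (t \<otimes> ((s \<otimes> t) [^] i \<otimes> s) \<otimes> t) \<otimes> s = (s \<otimes> t) [^] Suc (Suc i) \<otimes> s"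
  proof -
    fix i
    have p: "(s \<otimes> t) [^] Suc (Suc i) = (s \<otimes> t) \<otimes> ((s \<otimes> t) [^] i \<otimes> (s \<otimes> t))"
    proof -
      have "(s \<otimes> t) [^] Suc (Suc i) = (s \<otimes> t) \<otimes> (s \<otimes> t) [^] Suc i" by (rule nat_pow_Suc2[OF c])
      then show ?thesis by simp
    qed
    show "?thesis i" unfolding p using s t c by (simp add: m_assoc)
  qed
  moreover have eq: "2 * Suc k = Suc (Suc (2*k))" by simp
  ultimately show ?case using Suc s t unfolding eq map_upt_2
    by (simp add: m_assoc del: upt_Suc)
qed

lemma count_periodic:
  assumes "\<And>i. f (i + m) = f i"
  shows "count_list (map f [0..<2*m]) x = 2 * count_list (map f [0..<m]) x"
proof -
  have "[0..<m + m] = [0..<m] @ [m..<m+m]" by (rule upt_add_eq_append) simp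
  moreover have "map f [m..<m+m] = map f [0..<m]"
  proof -
    have "map f [m..<m+m] = map f (map (\<lambda>i. i + m) [0..<m])" using map_add_upt[of m m] by simp
    also have "\<dots> = map f [0..<m]" using assms by simp
    finally show ?thesis .
  qed
  ultimately show ?thesis by (simp add: mult_2)
qed

lemma ev_rel: "s \<in> S \<Longrightarrow> t \<in> S \<Longrightarrow> ev (concat (replicate k [s, t])) = (s \<otimes> t) [^] k"
proof (induction k)
  case (Suc k)
  have c: "s \<otimes> t \<in> carrier G" using Suc by simp
  have "(s \<otimes> t) [^] Suc k = (s \<otimes> t) \<otimes> (s \<otimes> t) [^] k" by (rule nat_pow_Suc2[OF c])
  then show ?case using Suc by (simp add: m_assoc)
qed simp

lemma rel_facts:
  assumes "r \<in> R"
  shows "r \<in> lists S" "even (length r)" "ev r = \<one>" "\<And>g x. even (count_list (map g (tseq G r)) x)"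
proof -
  obtain s t where st: "s \<in> S" "t \<in> S" "ord (s \<otimes> t) \<noteq> 0"
    and r: "r = concat (replicate (ord (s \<otimes> t)) [s, t])"
    using assms unfolding coxeter_relators_def by blast
  define m where "m = ord (s \<otimes> t)"
  have c: "s \<otimes> t \<in> carrier G" using st by simp
  show "r \<in> lists S" using r st by auto
  have "length (concat (replicate k [s, t])) = 2 * k" for k by (induction k) auto
  then show "even (length r)" using r by simp
  show "ev r = \<one>" using r ev_rel[OF st(1,2)] c by simp
  fix g x
  have "tseq G r = map (\<lambda>i. (s \<otimes> t) [^] i \<otimes> s) [0..<2*m]" using r rel_tseq[OF st(1,2)] m_def by simp
  then have "map g (tseq G r) = map (\<lambda>i. g ((s \<otimes> t) [^] i \<otimes> s)) [0..<2*m]" by simp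
  moreover have "(s \<otimes> t) [^] (i + m) = (s \<otimes> t) [^] i" for i
  proof -
    have "(s \<otimes> t) [^] (i + m) = (s \<otimes> t) [^] i \<otimes> (s \<otimes> t) [^] m" using nat_pow_mult[OF c] by simp
    also have "(s \<otimes> t) [^] m = \<one>" using c m_def by simp
    finally show ?thesis using c by simp
  qed
  ultimately show "even (count_list (map g (tseq G r)) x)"
    using count_periodic[of "\<lambda>i. g ((s \<otimes> t) [^] i \<otimes> s)" m x] by simp
qed

lemma wc_inv: "word_cong R xs ys \<Longrightarrow> (xs \<in> lists S \<longleftrightarrow> ys \<in> lists S) \<and>
   (xs \<in> lists S \<longrightarrow> even (length xs + length ys) \<and>
      (\<forall>t. even (count_list (tseq G xs) t + count_list (tseq G ys) t)))"
proof (induction rule: word_cong.induct)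
  case (wc_refl xs) then show ?case by auto
next
  case (wc_sym xs ys) then show ?case by (auto simp: add.commute)
next
  case (wc_trans xs ys zs) then show ?case
    by (metis even_add)
next
  case (wc_rel r xs ys)
  note rf = rel_facts[OF wc_rel]
  have l: "xs @ r @ ys \<in> lists S \<longleftrightarrow> xs @ ys \<in> lists S" using rf(1) by auto
  moreover
  { assume a: "xs @ r @ ys \<in> lists S"
    then have xs: "xs \<in> lists S" and ys: "ys \<in> lists S" by auto
    have "tseq G (r @ ys) = tseq G r @ tseq G ys"
      using tseq_append[OF rf(1) ys] rf(3) map_cj_one[OF tseq_carr[OF ys]] by simp
    then have e1: "tseq G (xs @ r @ ys) = tseq G xs @ map (cj (ev xs)) (tseq G r) @ map (cj (ev xs)) (tseq G ys)"
      using tseq_append[OF xs, of "r @ ys"] rf(1) ys by simp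
    have e2: "tseq G (xs @ ys) = tseq G xs @ map (cj (ev xs)) (tseq G ys)"
      using tseq_append[OF xs ys] .
    have "even (length (xs @ r @ ys) + length (xs @ ys))" using rf(2) by simp
    moreover have "even (count_list (tseq G (xs @ r @ ys)) t + count_list (tseq G (xs @ ys)) t)" for t
      unfolding e1 e2 using rf(4)[of "cj (ev xs)" t] by simp
    ultimately have "even (length (xs @ r @ ys) + length (xs @ ys)) \<and>
      (\<forall>t. even (count_list (tseq G (xs @ r @ ys)) t + count_list (tseq G (xs @ ys)) t))" by blast }
  ultimately show ?case by blast
qed

lemma par_inv:
  assumes xs: "xs \<in> lists S" and ys: "ys \<in> lists S" and e: "ev xs = ev ys"
  shows "even (length xs + length ys)" "\<And>t. even (count_list (tseq G xs) t + count_list (tseq G ys) t)"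
proof -
  have ry: "rev ys \<in> lists S" using ys by auto
  have z: "xs @ rev ys \<in> lists S" "ys @ rev ys \<in> lists S" using xs ys by auto
  have "ev (xs @ rev ys) = \<one>" "ev (ys @ rev ys) = \<one>"
    using ev_append[OF xs ry] ev_append[OF ys ry] ev_rev[OF ys] e ys by simp_all
  then have w1: "word_cong R (xs @ rev ys) []" and w2: "word_cong R (ys @ rev ys) []"
    using pres z by auto
  show "even (length xs + length ys)" using wc_inv[OF w1] z by simp
  fix t
  have "even (count_list (tseq G (xs @ rev ys)) t)" "even (count_list (tseq G (ys @ rev ys)) t)"
    using wc_inv[OF w1] wc_inv[OF w2] z by auto
  then show "even (count_list (tseq G xs) t + count_list (tseq G ys) t)"
    unfolding tseq_append[OF xs ry] tseq_append[OF ys ry] e by simp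
qed

end

context cox
begin

lemma S_cancel[simp]: "s \<in> S \<Longrightarrow> y \<in> carrier G \<Longrightarrow> s \<otimes> (s \<otimes> y) = y"
  by (simp add: S_sq m_assoc[symmetric])

lemma conj_inj: "x \<in> carrier G \<Longrightarrow> a \<in> carrier G \<Longrightarrow> b \<in> carrier G \<Longrightarrow> x \<otimes> a \<otimes> x = x \<otimes> b \<otimes> x \<Longrightarrow> a = b"
  by simp

lemma tseq_del: "xs \<in> lists S \<Longrightarrow> t \<in> set (tseq G xs) \<Longrightarrow> \<exists>a c b. xs = a @ c # b \<and> ev (a @ b) = t \<otimes> ev xs"
proof (induction xs arbitrary: t)
  case Nil then show ?case by simp
next
  case (Cons x xs)
  have x: "x \<in> S" and xs: "xs \<in> lists S" using Cons by auto
  show ?case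
  proof (cases "t = x")
    case True
    then show ?thesis using x xs by (intro exI[of _ "[]"]) (auto simp: m_assoc[symmetric])
  next
    case False
    then obtain t' where t': "t' \<in> set (tseq G xs)" "t = x \<otimes> t' \<otimes> x" using Cons by auto
    obtain a c b where abc: "xs = a @ c # b" "ev (a @ b) = t' \<otimes> ev xs" using Cons.IH[OF xs t'(1)] by blast
    have tc: "t' \<in> carrier G" using t' tseq_carr[OF xs] by auto
    have "ev ((x # a) @ b) = t \<otimes> ev (x # xs)"
      using abc t' x xs tc by (simp add: m_assoc)
    then show ?thesis using abc by (intro exI[of _ "x # a"]) auto
  qed
qed

lemma red_distinct: "xs \<in> lists S \<Longrightarrow> length xs = len (ev xs) \<Longrightarrow> distinct (tseq G xs)"
proof (induction xs)
  case Nil then show ?case by simp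
next
  case (Cons x xs)
  have x: "x \<in> S" and xs: "xs \<in> lists S" using Cons by auto
  have "len (ev (x # xs)) \<le> len x + len (ev xs)" using len_mult[of x "ev xs"] x xs by simp
  then have "len (ev (x # xs)) \<le> 1 + len (ev xs)" using len_S[OF x] by simp
  then have lx: "length xs = len (ev xs)" using Cons.prems len_le[OF xs] by simp
  have d: "distinct (tseq G xs)" using Cons.IH[OF xs lx] .
  have tc: "set (tseq G xs) \<subseteq> carrier G" using tseq_carr[OF xs] .
  have inj: "inj_on (\<lambda>t. x \<otimes> t \<otimes> x) (set (tseq G xs))"
  proof (rule inj_onI)
    fix a b assume "a \<in> set (tseq G xs)" "b \<in> set (tseq G xs)" "x \<otimes> a \<otimes> x = x \<otimes> b \<otimes> x"
    then show "a = b" using conj_inj[of x a b] tc x by auto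
  qed
  have xn: "x \<notin> set (tseq G xs)"
  proof
    assume "x \<in> set (tseq G xs)"
    then obtain a c b where abc: "xs = a @ c # b" "ev (a @ b) = x \<otimes> ev xs" using tseq_del[OF xs] by blast
    have "a @ b \<in> lists S" using abc xs by auto
    then have "len (ev (a @ b)) \<le> length (a @ b)" by (rule len_le)
    then show False using abc Cons.prems by simp
  qed
  moreover have "x \<notin> (\<lambda>t. x \<otimes> t \<otimes> x) ` set (tseq G xs)"
  proof
    assume "x \<in> (\<lambda>t. x \<otimes> t \<otimes> x) ` set (tseq G xs)"
    then obtain t' where t'2: "x = (\<lambda>t. x \<otimes> t \<otimes> x) t'" and t'1: "t' \<in> set (tseq G xs)"
      by (rule imageE)
    have e: "x \<otimes> t' \<otimes> x = x" using t'2[symmetric] by simp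
    have "x \<otimes> x \<otimes> x = x" using x S_sq by simp
    then have "x \<otimes> x \<otimes> x = x \<otimes> t' \<otimes> x" using e by simp
    moreover have "t' \<in> carrier G" using t'1 tc by auto
    ultimately have "x = t'" using x by (intro conj_inj[of x x t']) auto
    then show False using t'1 xn by simp
  qed
  ultimately show ?case using d inj by (simp add: distinct_map)
qed

lemma red_ev_len: "reduced_word G S xs w \<longleftrightarrow> xs \<in> lists S \<and> ev xs = w \<and> length xs = len w"
  by (simp add: reduced_word_def)

lemma exchange:
  assumes xs: "xs \<in> lists S" and r: "length xs = len (ev xs)" and s: "s \<in> S"
    and ne: "len (ev xs \<otimes> s) \<noteq> len (ev xs) + 1"
  shows "\<exists>a c b. xs = a @ c # b \<and> ev (a @ b) = ev xs \<otimes> s"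
proof -
  define X where "X = ev xs"
  have Xc: "X \<in> carrier G" using xs X_def by simp
  define t where "t = cj X s"
  show ?thesis
  proof (cases "t \<in> set (tseq G xs)")
    case True
    then obtain a c b where abc: "xs = a @ c # b" "ev (a @ b) = t \<otimes> ev xs" using tseq_del[OF xs] by blast
    have "t \<otimes> X = X \<otimes> s" using Xc s by (simp add: t_def cj_def m_assoc)
    then show ?thesis using abc X_def by auto
  next
    case False
    define ys where "ys = xs @ [s]"
    have ys: "ys \<in> lists S" using xs s ys_def by auto
    have "tseq G ys = tseq G xs @ [t]"
      using tseq_append[OF xs, of "[s]"] s by (simp add: ys_def t_def X_def)
    then have dys: "distinct (tseq G ys)" using red_distinct[OF xs r] False by simp
    have eys: "ev ys = X \<otimes> s" using ev_snoc[OF xs s] ys_def X_def by simp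
    obtain zs where zs: "zs \<in> lists S" "length zs = len (X \<otimes> s)" "ev zs = X \<otimes> s"
      using len_ex[of "X \<otimes> s"] Xc s by auto
    have dzs: "distinct (tseq G zs)" using red_distinct[OF zs(1)] zs by simp
    have "u \<in> set (tseq G ys) \<longleftrightarrow> u \<in> set (tseq G zs)" for u
    proof -
      have "even (count_list (tseq G ys) u + count_list (tseq G zs) u)"
        using par_inv(2)[OF ys zs(1)] eys zs(3) by simp
      then show ?thesis
        using count_distinct[OF dys, of u] count_distinct[OF dzs, of u] by (auto split: if_splits)
    qed
    then have "set (tseq G ys) = set (tseq G zs)" by blast
    then have "length ys = length zs"
      using distinct_card[OF dys] distinct_card[OF dzs] by simp
    then show ?thesis using ne zs ys_def r X_def by simp
  qed
qed

lemma len_step: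
  assumes w: "w \<in> carrier G" and s: "s \<in> S"
  shows "len (w \<otimes> s) = len w + 1 \<or> len w = len (w \<otimes> s) + 1"
proof -
  obtain xs where xs: "xs \<in> lists S" "length xs = len w" "ev xs = w" using len_ex[OF w] by blast
  obtain zs where zs: "zs \<in> lists S" "length zs = len (w \<otimes> s)" "ev zs = w \<otimes> s"
    using len_ex[of "w \<otimes> s"] w s by auto
  have "even (length (xs @ [s]) + length zs)"
    using par_inv(1)[of "xs @ [s]" zs] xs zs s ev_snoc[OF xs(1) s] by simp
  then have "even (len w + 1 + len (w \<otimes> s))" using xs zs by simp
  moreover have "len (w \<otimes> s) \<le> len w + 1" using len_mult[of w s] len_S[OF s] w s by simp
  moreover have "len w \<le> len (w \<otimes> s) + 1"
  proof -
    have "w = (w \<otimes> s) \<otimes> s" using w s by (simp add: m_assoc S_sq)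
    then have "len w \<le> len (w \<otimes> s) + len s" using len_mult[of "w \<otimes> s" s] w s by simp
    then show ?thesis using len_S[OF s] by simp
  qed
  ultimately show ?thesis by (cases "len (w \<otimes> s) = len w") auto
qed

lemma reduce: "xs \<in> lists S \<Longrightarrow> \<exists>ys. set ys \<subseteq> set xs \<and> reduced_word G S ys (ev xs)"
proof (induction xs rule: rev_induct)
  case Nil then show ?case by (simp add: red_ev_len)
next
  case (snoc x xs)
  have x: "x \<in> S" and xs: "xs \<in> lists S" using snoc by auto
  obtain ys where ys: "set ys \<subseteq> set xs" "ys \<in> lists S" "ev ys = ev xs" "length ys = len (ev xs)"
    using snoc.IH[OF xs] by (auto simp: red_ev_len)
  define Y where "Y = ev ys"
  have Yc: "Y \<in> carrier G" unfolding Y_def using ev_closed[OF ys(2)] .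
  have e: "ev (xs @ [x]) = Y \<otimes> x" using ev_snoc[OF xs x] ys Y_def by simp
  show ?case
  proof (cases "len (Y \<otimes> x) = len Y + 1")
    case True
    have "ev (ys @ [x]) = Y \<otimes> x" using ev_snoc[OF ys(2) x] Y_def by simp
    then show ?thesis using True ys x e Y_def
      by (intro exI[of _ "ys @ [x]"]) (auto simp: red_ev_len)
  next
    case False
    then obtain a c b where abc: "ys = a @ c # b" "ev (a @ b) = Y \<otimes> x"
      using exchange[OF ys(2) _ x] ys Y_def by auto
    have "len Y = len (Y \<otimes> x) + 1" using len_step[OF Yc x] False by simp
    then show ?thesis using abc ys e Y_def
      by (intro exI[of _ "a @ b"]) (auto simp: red_ev_len)
  qed
qed

end

context cox
begin

abbreviation par where "par J \<equiv> parabolic G J"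
abbreviation sup where "sup w \<equiv> cox_support G S w"
abbreviation X where "X J \<equiv> min_reps G S J"

lemma lists_mono': "J \<subseteq> S \<Longrightarrow> xs \<in> lists J \<Longrightarrow> xs \<in> lists S"
  by auto

lemma par_sub: "J \<subseteq> S \<Longrightarrow> a \<in> par J \<Longrightarrow> a \<in> carrier G"
  unfolding parabolic_def using lists_mono' ev_closed by blast

lemma par_one: "\<one> \<in> par J"
  unfolding parabolic_def by (auto intro!: image_eqI[of _ _ "[]"])

lemma par_mult: "J \<subseteq> S \<Longrightarrow> a \<in> par J \<Longrightarrow> b \<in> par J \<Longrightarrow> a \<otimes> b \<in> par J"
  unfolding parabolic_def
proof -
  assume J: "J \<subseteq> S" and "a \<in> ev ` lists J" "b \<in> ev ` lists J"
  then obtain xs ys where xy: "xs \<in> lists J" "ys \<in> lists J" "a = ev xs" "b = ev ys" by blast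
  then have "xs \<in> lists S" "ys \<in> lists S" using J by auto
  then have "a \<otimes> b = ev (xs @ ys)" using xy ev_append[of xs ys] by simp
  then show "a \<otimes> b \<in> ev ` lists J" using xy by auto
qed

lemma par_inverse: "J \<subseteq> S \<Longrightarrow> a \<in> par J \<Longrightarrow> inv a \<in> par J"
  unfolding parabolic_def
proof -
  assume J: "J \<subseteq> S" and "a \<in> ev ` lists J"
  then obtain xs where xy: "xs \<in> lists J" "a = ev xs" by blast
  then have "xs \<in> lists S" using J by auto
  then have "inv a = ev (rev xs)" using xy ev_rev[of xs] by simp
  then show "inv a \<in> ev ` lists J" using xy by auto
qed

lemma par_gen: "J \<subseteq> S \<Longrightarrow> s \<in> J \<Longrightarrow> s \<in> par J"
  unfolding parabolic_def by (intro image_eqI[of _ _ "[s]"]) auto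

lemma par_mono: "J \<subseteq> K \<Longrightarrow> par J \<subseteq> par K"
  unfolding parabolic_def by (auto intro: lists_mono[THEN subsetD])

lemma par_of_list: "xs \<in> lists J \<Longrightarrow> ev xs \<in> par J"
  unfolding parabolic_def by auto

lemma red_from_par: "J \<subseteq> S \<Longrightarrow> w \<in> par J \<Longrightarrow> \<exists>ys. set ys \<subseteq> J \<and> reduced_word G S ys w"
proof -
  assume J: "J \<subseteq> S" and "w \<in> par J"
  then obtain zs where zs: "zs \<in> lists J" "w = ev zs" unfolding parabolic_def by blast
  then obtain ys where "set ys \<subseteq> set zs" "reduced_word G S ys w" using reduce[of zs] J by auto
  then show ?thesis using zs by auto
qed

lemma len_S1: "s \<in> S \<Longrightarrow> len s = 1"
  using len_S[of s] len_zero[of s] S_ne[of s] by fastforce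

lemma red_in_par: "J \<subseteq> S \<Longrightarrow> w \<in> par J \<Longrightarrow> reduced_word G S xs w \<Longrightarrow> set xs \<subseteq> J"
proof (induction xs arbitrary: w rule: rev_induct)
  case Nil then show ?case by simp
next
  case (snoc s xs)
  have s: "s \<in> S" and xs: "xs \<in> lists S" using snoc.prems by (auto simp: red_ev_len)
  have w: "w = ev xs \<otimes> s" and lw: "length xs + 1 = len w"
    using snoc.prems ev_snoc[OF xs s] by (auto simp: red_ev_len)
  have wc: "w \<in> carrier G" using w xs s by simp
  have ws: "w \<otimes> s = ev xs" using w xs s by (simp add: m_assoc S_sq)
  have "len w \<le> len (ev xs) + len s" using len_mult[of "ev xs" s] w xs s by simp
  then have lxs: "length xs = len (ev xs)" using lw len_S[OF s] len_le[OF xs] by simp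
  obtain ys where ys: "set ys \<subseteq> J" "reduced_word G S ys w" using red_from_par[OF snoc.prems(1,2)] by blast
  have ysS: "ys \<in> lists S" "ev ys = w" "length ys = len w" using ys by (auto simp: red_ev_len)
  have "len (w \<otimes> s) \<noteq> len w + 1" using ws lxs lw by simp
  then obtain a c b where abc: "ys = a @ c # b" "ev (a @ b) = w \<otimes> s"
    using exchange[OF ysS(1) _ s] ysS by auto
  have "a @ b \<in> lists J" using abc ys by auto
  then have wsJ: "w \<otimes> s \<in> par J" using abc par_of_list by metis
  have "inv (w \<otimes> s) \<otimes> w = s" using wc s by (simp add: inv_mult_group m_assoc)
  then have sJ: "s \<in> par J" using par_mult[OF snoc.prems(1) par_inverse[OF snoc.prems(1) wsJ] snoc.prems(2)] by simp
  obtain zs where zs: "set zs \<subseteq> J" "reduced_word G S zs s" using red_from_par[OF snoc.prems(1) sJ] by blast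
  then have "length zs = 1" "ev zs = s" using len_S1[OF s] by (auto simp: red_ev_len)
  moreover obtain j where j: "zs = [j]" using \<open>length zs = 1\<close> by (cases zs) auto
  moreover have "j \<in> J" using zs j by auto
  ultimately have "s \<in> J" using snoc.prems(1) by auto
  moreover have "set xs \<subseteq> J"
    using snoc.IH[OF snoc.prems(1), of "ev xs"] wsJ ws xs lxs by (auto simp: red_ev_len)
  ultimately show ?case by simp
qed

lemma sup_red: "reduced_word G S xs w \<Longrightarrow> sup w = set xs"
proof -
  assume r: "reduced_word G S xs w"
  then have xs: "xs \<in> lists S" "ev xs = w" by (auto simp: red_ev_len)
  have J: "set xs \<subseteq> S" using xs by auto
  have wp: "w \<in> par (set xs)" using xs par_of_list[of xs "set xs"] by auto
  have "set ys \<subseteq> set xs" if "reduced_word G S ys w" for ys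
    using red_in_par[OF J wp that] .
  then show ?thesis unfolding cox_support_def using r by blast
qed

lemma sup_ex: "w \<in> carrier G \<Longrightarrow> \<exists>xs. reduced_word G S xs w \<and> sup w = set xs"
  using red_ex sup_red by blast

lemma sup_sub: "w \<in> carrier G \<Longrightarrow> sup w \<subseteq> S"
  using sup_ex by (fastforce simp: red_ev_len)

lemma in_par_sup: "w \<in> carrier G \<Longrightarrow> w \<in> par (sup w)"
  using sup_ex par_of_list by (fastforce simp: red_ev_len)

lemma sup_par: "J \<subseteq> S \<Longrightarrow> w \<in> par J \<Longrightarrow> sup w \<subseteq> J"
  using red_in_par sup_ex par_sub by metis

lemma sup_mult:
  assumes a: "a \<in> carrier G" and b: "b \<in> carrier G" and l: "len (a \<otimes> b) = len a + len b"
  shows "sup (a \<otimes> b) = sup a \<union> sup b"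
proof -
  obtain xs where xs: "reduced_word G S xs a" "sup a = set xs" using sup_ex[OF a] by blast
  obtain ys where ys: "reduced_word G S ys b" "sup b = set ys" using sup_ex[OF b] by blast
  have "reduced_word G S (xs @ ys) (a \<otimes> b)"
    using xs ys l ev_append[of xs ys] by (auto simp: red_ev_len)
  then show ?thesis using sup_red xs ys by simp
qed

lemma desc_ex:
  assumes w: "w \<in> carrier G" and ne: "w \<noteq> \<one>"
  shows "\<exists>s\<in>sup w. len (w \<otimes> s) < len w"
proof -
  obtain xs where xs: "reduced_word G S xs w" "sup w = set xs" using sup_ex[OF w] by blast
  have "xs \<noteq> []" using xs ne by (auto simp: red_ev_len)
  then obtain ys s where ys: "xs = ys @ [s]" by (metis rev_exhaust)
  have s: "s \<in> S" and ysS: "ys \<in> lists S" using xs ys by (auto simp: red_ev_len)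
  have "w = ev ys \<otimes> s" using xs ys ev_snoc[OF ysS s] by (simp add: red_ev_len)
  then have "w \<otimes> s = ev ys" using ysS s by (simp add: m_assoc S_sq)
  then have "len (w \<otimes> s) < len w" using len_le[OF ysS] xs ys by (simp add: red_ev_len)
  then show ?thesis using xs ys by auto
qed

end

context cox
begin

lemma X_iff: "x \<in> X J \<longleftrightarrow> x \<in> carrier G \<and> (\<forall>s\<in>J. len x < len (x \<otimes> s))"
  unfolding min_reps_def by auto

lemma coset_min:
  assumes J: "J \<subseteq> S" and w: "w \<in> carrier G"
  shows "\<exists>y\<in>par J. \<forall>y'\<in>par J. len (w \<otimes> inv y) \<le> len (w \<otimes> inv y')"
  using ex_has_least_nat[of "\<lambda>y. y \<in> par J" \<one> "\<lambda>y. len (w \<otimes> inv y)"] par_one by blast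

lemma min_additive:
  assumes J: "J \<subseteq> S" and m: "m \<in> carrier G" and mn: "\<forall>z\<in>par J. len m \<le> len (m \<otimes> z)"
    and z: "z \<in> par J"
  shows "len (m \<otimes> z) = len m + len z"
proof -
  obtain xm where xm: "xm \<in> lists S" "ev xm = m" "length xm = len m" using len_ex[OF m] by blast
  have main: "zs \<in> lists J \<Longrightarrow> length zs = len (ev zs) \<Longrightarrow> len (m \<otimes> ev zs) = len m + length zs" for zs
  proof (induction zs rule: rev_induct)
    case Nil then show ?case using m by simp
  next
    case (snoc s zs)
    have sJ: "s \<in> J" and zsJ: "zs \<in> lists J" using snoc.prems by auto
    have s: "s \<in> S" and zsS: "zs \<in> lists S" using sJ zsJ J by auto
    define z' where "z' = ev zs"
    have z'c: "z' \<in> carrier G" using zsS z'_def by simp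
    have ez: "ev (zs @ [s]) = z' \<otimes> s" using ev_snoc[OF zsS s] z'_def by simp
    have "len (z' \<otimes> s) \<le> len z' + len s" using len_mult[OF z'c] s by simp
    then have lzs: "length zs = len z'"
      using snoc.prems(2) ez len_S[OF s] len_le[OF zsS] z'_def by simp
    have IH: "len (m \<otimes> z') = len m + length zs" using snoc.IH[OF zsJ] lzs z'_def by simp
    have mz'c: "m \<otimes> z' \<in> carrier G" using m z'c by simp
    have assoc: "m \<otimes> (z' \<otimes> s) = m \<otimes> z' \<otimes> s" using m z'c s by (simp add: m_assoc)
    show ?case
    proof (cases "len (m \<otimes> z' \<otimes> s) = len (m \<otimes> z') + 1")
      case True
      then show ?thesis using IH ez assoc by simp
    next
      case False
      have redw: "xm @ zs \<in> lists S" "length (xm @ zs) = len (ev (xm @ zs))" "ev (xm @ zs) = m \<otimes> z'"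
        using xm zsS IH ev_append[OF xm(1) zsS] z'_def by auto
      then obtain a c b where abc: "xm @ zs = a @ c # b" "ev (a @ b) = m \<otimes> z' \<otimes> s"
        using exchange[OF redw(1,2) s] False by auto
      from abc(1) obtain us where
        cs: "(xm = a @ us \<and> us @ zs = c # b) \<or> (xm @ us = a \<and> zs = us @ c # b)"
        by (auto simp: append_eq_append_conv2)
      have "a @ c # b \<in> lists S" using abc(1) xm(1) zsS by (metis append_in_lists_conv)
      moreover have "us \<in> lists S" using cs xm(1) zsS by (metis append_in_lists_conv)
      ultimately have lsS: "a \<in> lists S" "b \<in> lists S" "c \<in> S" "us \<in> lists S" by auto
      show ?thesis
      proof (cases "(xm = a @ us \<and> us @ zs = c # b) \<and> us \<noteq> []")
        case True
        then obtain us' where us': "us = c # us'" "b = us' @ zs" by (cases us) auto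
        have usS: "us' \<in> lists S" using lsS us' by auto
        have "ev (a @ b) = ev (a @ us') \<otimes> z'"
          using us' ev_append[of "a @ us'" zs] lsS usS zsS z'_def by simp
        then have e1: "ev (a @ us') \<otimes> z' = m \<otimes> z' \<otimes> s" using abc by simp
        have auc: "ev (a @ us') \<in> carrier G" using lsS usS by simp
        have "ev (a @ us') = m \<otimes> (z' \<otimes> s \<otimes> inv z')"
        proof -
          have "ev (a @ us') = ev (a @ us') \<otimes> z' \<otimes> inv z'" using auc z'c by (simp add: m_assoc)
          also have "\<dots> = m \<otimes> (z' \<otimes> s \<otimes> inv z')" using e1 m z'c s by (simp add: m_assoc)
          finally show ?thesis .
        qed
        moreover have "z' \<otimes> s \<otimes> inv z' \<in> par J"
          using par_mult[OF J par_mult[OF J _ par_gen[OF J sJ]] par_inverse[OF J]] par_of_list[OF zsJ] z'_def by blast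
        ultimately have "len m \<le> len (ev (a @ us'))" using mn by simp
        moreover have "len (ev (a @ us')) \<le> length (a @ us')" using lsS usS by (intro len_le) auto
        moreover have "length xm = length (a @ us') + 1" using True us' by simp
        ultimately show ?thesis using xm by simp
      next
        case False
        then obtain us2 where us2: "zs = us2 @ c # b" "a = xm @ us2" using cs by (metis append_Nil append_Nil2)
        have u2S: "us2 \<in> lists S" using us2 zsS by auto
        have "ev (a @ b) = m \<otimes> ev (us2 @ b)" using us2 ev_append[of xm "us2 @ b"] xm u2S lsS by simp
        then have "m \<otimes> ev (us2 @ b) = m \<otimes> (z' \<otimes> s)" using abc assoc by simp
        then have "ev (us2 @ b) = z' \<otimes> s" using m z'c s u2S lsS by simp
        moreover have "len (ev (us2 @ b)) \<le> length (us2 @ b)" using u2S lsS by (intro len_le) auto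
        ultimately have "len (z' \<otimes> s) < length (zs @ [s])" using us2 by simp
        then show ?thesis using snoc.prems(2) ez by simp
      qed
    qed
  qed
  obtain zs where zs: "set zs \<subseteq> J" "reduced_word G S zs z" using red_from_par[OF J z] by blast
  then show ?thesis using main[of zs] by (auto simp: red_ev_len)
qed

lemma X_additive:
  assumes J: "J \<subseteq> S" and x: "x \<in> X J" and y: "y \<in> par J"
  shows "len (x \<otimes> y) = len x + len y"
proof -
  have xc: "x \<in> carrier G" using x X_iff by auto
  obtain y0 where y0: "y0 \<in> par J" "\<forall>y'\<in>par J. len (x \<otimes> inv y0) \<le> len (x \<otimes> inv y')"
    using coset_min[OF J xc] by blast
  have y0c: "y0 \<in> carrier G" using par_sub[OF J y0(1)] .
  define m where "m = x \<otimes> inv y0"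
  have mc: "m \<in> carrier G" using xc y0c m_def by simp
  have mn: "\<forall>z\<in>par J. len m \<le> len (m \<otimes> z)"
  proof
    fix z assume z: "z \<in> par J"
    have zc: "z \<in> carrier G" using par_sub[OF J z] .
    have "m \<otimes> z = x \<otimes> inv (inv z \<otimes> y0)" using xc y0c zc by (simp add: m_def inv_mult_group m_assoc)
    moreover have "inv z \<otimes> y0 \<in> par J" using par_mult[OF J par_inverse[OF J z] y0(1)] .
    ultimately show "len m \<le> len (m \<otimes> z)" using y0(2) m_def by simp
  qed
  have xm: "x = m \<otimes> y0" using xc y0c m_def by (simp add: m_assoc)
  have "y0 = \<one>"
  proof (rule ccontr)
    assume "y0 \<noteq> \<one>"
    then obtain s where s: "s \<in> sup y0" "len (y0 \<otimes> s) < len y0" using desc_ex[OF y0c] by blast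
    have sJ: "s \<in> J" using s(1) sup_par[OF J y0(1)] by auto
    have ys: "y0 \<otimes> s \<in> par J" using par_mult[OF J y0(1) par_gen[OF J sJ]] .
    have "len (x \<otimes> s) = len (m \<otimes> (y0 \<otimes> s))" using xm mc y0c sJ J by (auto simp: m_assoc)
    also have "\<dots> = len m + len (y0 \<otimes> s)" using min_additive[OF J mc mn ys] .
    also have "\<dots> < len m + len y0" using s by simp
    also have "\<dots> = len x" using min_additive[OF J mc mn y0(1)] xm by simp
    finally show False using x sJ X_iff by auto
  qed
  then have "m = x" using xm mc by simp
  then show ?thesis using min_additive[OF J mc mn y] by simp
qed

lemma decomp_unique:
  assumes J: "J \<subseteq> S" and x: "x \<in> X J" and x': "x' \<in> X J" and y: "y \<in> par J" and y': "y' \<in> par J"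
    and e: "x \<otimes> y = x' \<otimes> y'"
  shows "y = y'"
proof -
  have c: "x \<in> carrier G" "x' \<in> carrier G" "y \<in> carrier G" "y' \<in> carrier G"
    using x x' X_iff par_sub[OF J y] par_sub[OF J y'] by auto
  have e1: "x' = x \<otimes> (y \<otimes> inv y')"
  proof -
    have "x' = x' \<otimes> y' \<otimes> inv y'" using c by (simp add: m_assoc)
    also have "\<dots> = x \<otimes> y \<otimes> inv y'" by (simp only: e)
    also have "\<dots> = x \<otimes> (y \<otimes> inv y')" using c by (simp add: m_assoc)
    finally show ?thesis .
  qed
  have e2: "x = x' \<otimes> (y' \<otimes> inv y)"
  proof -
    have "x = x \<otimes> y \<otimes> inv y" using c by (simp add: m_assoc)
    also have "\<dots> = x' \<otimes> y' \<otimes> inv y" by (simp only: e)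
    also have "\<dots> = x' \<otimes> (y' \<otimes> inv y)" using c by (simp add: m_assoc)
    finally show ?thesis .
  qed
  have p1: "y \<otimes> inv y' \<in> par J" using par_mult[OF J y par_inverse[OF J y']] .
  have p2: "y' \<otimes> inv y \<in> par J" using par_mult[OF J y' par_inverse[OF J y]] .
  have "len x' = len x + len (y \<otimes> inv y')" using X_additive[OF J x p1] e1 by simp
  moreover have "len x = len x' + len (y' \<otimes> inv y)" using X_additive[OF J x' p2] e2 by simp
  ultimately have "len (y \<otimes> inv y') = 0" by simp
  then have "y \<otimes> inv y' = \<one>" using len_zero c by simp
  then show ?thesis using c by (metis inv_closed inv_inv inv_equality)
qed

lemma decomp_ex:
  assumes J: "J \<subseteq> S" and w: "w \<in> carrier G"
  shows "\<exists>y\<in>par J. w \<otimes> inv y \<in> X J"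
proof -
  obtain y where y: "y \<in> par J" "\<forall>y'\<in>par J. len (w \<otimes> inv y) \<le> len (w \<otimes> inv y')"
    using coset_min[OF J w] by blast
  have yc: "y \<in> carrier G" using par_sub[OF J y(1)] .
  have "len (w \<otimes> inv y) < len (w \<otimes> inv y \<otimes> s)" if sJ: "s \<in> J" for s
  proof -
    have s: "s \<in> S" using sJ J by auto
    have "w \<otimes> inv y \<otimes> s = w \<otimes> inv (s \<otimes> y)" using w yc s by (simp add: inv_mult_group m_assoc)
    moreover have "s \<otimes> y \<in> par J" using par_mult[OF J par_gen[OF J sJ] y(1)] .
    ultimately have "len (w \<otimes> inv y) \<le> len (w \<otimes> inv y \<otimes> s)" using y(2) by simp
    moreover have "len (w \<otimes> inv y \<otimes> s) \<noteq> len (w \<otimes> inv y)" using len_step[of "w \<otimes> inv y" s] w yc s by auto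
    ultimately show ?thesis by simp
  qed
  then show ?thesis using y w yc X_iff by auto
qed

lemma comp_char:
  assumes J: "J \<subseteq> S" and x: "x \<in> X J" and y: "y \<in> par J"
  shows "par_comp G S J (x \<otimes> y) = y"
  unfolding par_comp_def
proof (rule the_equality)
  have c: "x \<in> carrier G" "y \<in> carrier G" using x X_iff par_sub[OF J y] by auto
  show "y \<in> par J \<and> x \<otimes> y \<otimes> inv y \<in> X J" using y x c by (simp add: m_assoc)
  fix y' assume a: "y' \<in> par J \<and> x \<otimes> y \<otimes> inv y' \<in> X J"
  have y'c: "y' \<in> carrier G" using par_sub[OF J] a by blast
  have "x \<otimes> y = (x \<otimes> y \<otimes> inv y') \<otimes> y'" using c y'c by (simp add: m_assoc)
  then show "y' = y" using decomp_unique[OF J x _ y, of "x \<otimes> y \<otimes> inv y'" y'] a by simp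
qed

lemma comp_props:
  assumes J: "J \<subseteq> S" and w: "w \<in> carrier G"
  shows "par_comp G S J w \<in> par J" "par_quot G S J w \<in> X J"
    "w = par_quot G S J w \<otimes> par_comp G S J w"
    "len w = len (par_quot G S J w) + len (par_comp G S J w)"
proof -
  obtain y where y: "y \<in> par J" "w \<otimes> inv y \<in> X J" using decomp_ex[OF J w] by blast
  have yc: "y \<in> carrier G" using par_sub[OF J y(1)] .
  have wy: "w = (w \<otimes> inv y) \<otimes> y" using w yc by (simp add: m_assoc)
  have c: "par_comp G S J w = y" using comp_char[OF J y(2) y(1)] wy by simp
  show "par_comp G S J w \<in> par J" using c y by simp
  show q: "par_quot G S J w \<in> X J" using c y unfolding par_quot_def by simp
  show "w = par_quot G S J w \<otimes> par_comp G S J w" using c wy unfolding par_quot_def by simp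
  show "len w = len (par_quot G S J w) + len (par_comp G S J w)"
    using X_additive[OF J y(2) y(1)] c wy unfolding par_quot_def by simp
qed

end

context cox
begin

abbreviation le where "le \<equiv> cox_le G S"
abbreviation comp where "comp \<equiv> par_comp G S"
abbreviation quot where "quot \<equiv> par_quot G S"

lemma le_char:
  assumes "le a b"
  shows "a \<in> carrier G" "b \<in> carrier G" "quot (sup a) b \<in> X (sup a)" "b = quot (sup a) b \<otimes> a"
    "len b = len (quot (sup a) b) + len a" "sup b = sup (quot (sup a) b) \<union> sup a" "sup a \<subseteq> sup b"
proof -
  show a: "a \<in> carrier G" and b: "b \<in> carrier G" using assms unfolding cox_le_def by auto
  have c: "comp (sup a) b = a" using assms unfolding cox_le_def by auto
  note cp = comp_props[OF sup_sub[OF a] b]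
  show "quot (sup a) b \<in> X (sup a)" using cp by simp
  show e: "b = quot (sup a) b \<otimes> a" using cp c by simp
  show l: "len b = len (quot (sup a) b) + len a" using cp c by simp
  have qc: "quot (sup a) b \<in> carrier G" using cp X_iff by auto
  show "sup b = sup (quot (sup a) b) \<union> sup a" using sup_mult[OF qc a] e l by simp
  then show "sup a \<subseteq> sup b" by blast
qed

lemma le_intro:
  assumes a: "a \<in> carrier G" and x: "x \<in> X (sup a)"
  shows "le a (x \<otimes> a)"
proof -
  have "comp (sup a) (x \<otimes> a) = a" using comp_char[OF sup_sub[OF a] x in_par_sup[OF a]] .
  then show ?thesis unfolding cox_le_def using a x X_iff by auto
qed

lemma X_compose:
  assumes J: "J \<subseteq> S" and K: "K \<subseteq> J" and z: "z \<in> X J" and p: "p \<in> X K" and pJ: "p \<in> par J"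
  shows "z \<otimes> p \<in> X K"
proof -
  have zc: "z \<in> carrier G" and pc: "p \<in> carrier G" using z p X_iff by auto
  have "len (z \<otimes> p) < len (z \<otimes> p \<otimes> t)" if t: "t \<in> K" for t
  proof -
    have tS: "t \<in> S" using t K J by auto
    have ptJ: "p \<otimes> t \<in> par J" using par_mult[OF J pJ par_gen[OF J]] t K by auto
    have "len (z \<otimes> p \<otimes> t) = len (z \<otimes> (p \<otimes> t))" using zc pc tS by (simp add: m_assoc)
    also have "\<dots> = len z + len (p \<otimes> t)" using X_additive[OF J z ptJ] .
    finally have "len (z \<otimes> p \<otimes> t) = len z + len (p \<otimes> t)" .
    moreover have "len (z \<otimes> p) = len z + len p" using X_additive[OF J z pJ] .
    moreover have "len p < len (p \<otimes> t)" using p t X_iff by auto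
    ultimately show ?thesis by simp
  qed
  then show ?thesis using zc pc X_iff by auto
qed

lemma le_trans:
  assumes ab: "le a b" and bc: "le b c"
  shows "le a c"
proof -
  note A = le_char[OF ab] and B = le_char[OF bc]
  define y where "y = quot (sup a) b"
  define z where "z = quot (sup b) c"
  have Jb: "sup b \<subseteq> S" using sup_sub[OF A(2)] .
  have yc: "y \<in> carrier G" using A(3) X_iff y_def by auto
  have yJ: "y \<in> par (sup b)"
  proof -
    have "b \<otimes> inv a = (y \<otimes> a) \<otimes> inv a" using A(4) y_def by simp
    also have "\<dots> = y" using yc A(1) by (simp add: m_assoc)
    finally have "y = b \<otimes> inv a" by simp
    moreover have "a \<in> par (sup b)" using in_par_sup[OF A(1)] par_mono[OF A(7)] by auto
    ultimately show ?thesis using par_mult[OF Jb in_par_sup[OF A(2)] par_inverse[OF Jb]] by auto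
  qed
  have zy: "z \<otimes> y \<in> X (sup a)" using X_compose[OF Jb A(7) _ _ yJ] B(3) A(3) y_def z_def by simp
  have "c = (z \<otimes> y) \<otimes> a" using B(4) A(4) z_def y_def yc A(1) B(3) X_iff by (simp add: m_assoc)
  then show ?thesis using le_intro[OF A(1) zy] by simp
qed

lemma comp_comp:
  assumes J: "J \<subseteq> S" and K: "K \<subseteq> J" and w: "w \<in> carrier G"
  shows "comp K (comp J w) = comp K w"
proof -
  have KS: "K \<subseteq> S" using K J by auto
  note P = comp_props[OF J w]
  have wJc: "comp J w \<in> carrier G" using par_sub[OF J P(1)] .
  note Q = comp_props[OF KS wJc]
  define p where "p = quot K (comp J w)"
  define q where "q = comp K (comp J w)"
  have qc: "q \<in> carrier G" using par_sub[OF KS Q(1)] q_def by simp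
  have pc: "p \<in> carrier G" using Q(2) X_iff p_def by auto
  have qJ: "q \<in> par J" using par_mono[OF K] Q(1) q_def by auto
  have pJ: "p \<in> par J"
  proof -
    have "comp J w \<otimes> inv q = (p \<otimes> q) \<otimes> inv q" using Q(3) p_def q_def by simp
    also have "\<dots> = p" using pc qc by (simp add: m_assoc)
    finally have "p = comp J w \<otimes> inv q" by simp
    then show ?thesis using par_mult[OF J P(1) par_inverse[OF J qJ]] by simp
  qed
  have zp: "quot J w \<otimes> p \<in> X K" using X_compose[OF J K P(2) _ pJ] Q(2) p_def by simp
  have qK: "q \<in> par K" using Q(1) q_def by simp
  have zc: "quot J w \<in> carrier G" using P(2) X_iff by auto
  have "w = (quot J w \<otimes> p) \<otimes> q" using P(3) Q(3) p_def q_def zc pc qc by (simp add: m_assoc)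
  then have "comp K w = q" using comp_char[OF KS zp qK] by simp
  then show ?thesis using q_def by simp
qed

lemma one_X: "J \<subseteq> S \<Longrightarrow> \<one> \<in> X J"
  unfolding X_iff using len_S1 by auto

end

context cox
begin

abbreviation less where "less \<equiv> cox_less G S"

lemma main_in_locale:
  assumes uv: "less u v"
  shows "card {u' \<in> cox_interval G S u v. cox_covers G S u u'}
         = card (cox_descents G S (quot (sup u) v))"
proof -
  have uvle: "le u v" and une: "u \<noteq> v" using uv unfolding cox_less_def by auto
  note UV = le_char[OF uvle]
  define I where "I = sup u"
  define x where "x = quot I v"
  define D where "D = cox_descents G S x"
  define f where "f s = comp (I \<union> {s}) v" for s
  have uc: "u \<in> carrier G" and vc: "v \<in> carrier G" using UV by auto
  have IS: "I \<subseteq> S" using sup_sub[OF uc] I_def by simp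
  have cu: "comp I v = u" using uvle I_def unfolding cox_le_def by simp
  have xX: "x \<in> X I" using UV(3) I_def x_def by simp
  have xc: "x \<in> carrier G" using xX X_iff by auto
  have vxu: "v = x \<otimes> u" using UV(4) I_def x_def by simp
  have fprops: "s \<in> S \<and> s \<notin> I \<and> sup (f s) = I \<union> {s} \<and> le u (f s) \<and> le (f s) v \<and> less u (f s)
      \<and> (\<forall>z. \<not> (less u z \<and> less z (f s)))" if sD: "s \<in> D" for s
  proof -
    have s: "s \<in> S" and ds: "len (x \<otimes> s) < len x" using sD unfolding D_def cox_descents_def by auto
    have sI: "s \<notin> I" using xX ds X_iff by fastforce
    define K where "K = I \<union> {s}"
    have KS: "K \<subseteq> S" using IS s K_def by auto
    have IK: "I \<subseteq> K" using K_def by auto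
    note PK = comp_props[OF KS vc]
    have fc: "f s \<in> carrier G" using par_sub[OF KS PK(1)] f_def K_def by simp
    have supK: "sup (f s) \<subseteq> K" using sup_par[OF KS PK(1)] f_def K_def by simp
    have cI: "comp I (f s) = u" using comp_comp[OF KS IK vc] cu f_def K_def by simp
    have ufs: "le u (f s)" unfolding cox_le_def using uc fc cI I_def by simp
    have Isup: "I \<subseteq> sup (f s)" using le_char(7)[OF ufs] I_def by simp
    have ssup: "s \<in> sup (f s)"
    proof (rule ccontr)
      assume "s \<notin> sup (f s)"
      then have "sup (f s) \<subseteq> I" using supK K_def by auto
      then have "f s \<in> par I" using in_par_sup[OF fc] par_mono by blast
      then have "comp I (\<one> \<otimes> f s) = f s" using comp_char[OF IS one_X[OF IS]] by blast
      then have fsu: "f s = u" using cI fc by simp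
      have "v = quot K v \<otimes> u" using PK(3) fsu f_def K_def by simp
      then have "x \<otimes> u = quot K v \<otimes> u" using vxu by simp
      then have "x = quot K v" using xc uc PK(2) X_iff by auto
      then have "len x < len (x \<otimes> s)" using PK(2) X_iff K_def by auto
      then show False using ds by simp
    qed
    have supf: "sup (f s) = K" using supK Isup ssup K_def by auto
    have fsv: "le (f s) v" unfolding cox_le_def using fc vc supf f_def K_def by simp
    have ufs_ne: "u \<noteq> f s" using ssup sI I_def by auto
    have cov: "\<not> (less u z \<and> less z (f s))" for z
    proof
      assume a: "less u z \<and> less z (f s)"
      then have uz: "le u z" and zf: "le z (f s)" and ne1: "u \<noteq> z" and ne2: "z \<noteq> f s"
        unfolding cox_less_def by auto
      have zv: "le z v" using le_trans[OF zf fsv] .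
      have s1: "I \<subseteq> sup z" using le_char(7)[OF uz] I_def by simp
      have s2: "sup z \<subseteq> K" using le_char(7)[OF zf] supf by simp
      have zz: "comp (sup z) v = z" using zv unfolding cox_le_def by simp
      show False
      proof (cases "s \<in> sup z")
        case True
        then have "sup z = K" using s1 s2 K_def by auto
        then show False using zz ne2 f_def K_def by simp
      next
        case False
        then have "sup z = I" using s1 s2 K_def by auto
        then show False using zz ne1 cu by simp
      qed
    qed
    show ?thesis using s sI supf K_def ufs fsv ufs_ne cov unfolding cox_less_def by auto
  qed
  have covset: "{u' \<in> cox_interval G S u v. cox_covers G S u u'} = f ` D"
  proof (intro equalityI subsetI)
    fix u' assume "u' \<in> {u' \<in> cox_interval G S u v. cox_covers G S u u'}"
    then have uu': "le u u'" and u'v: "le u' v" and cov: "cox_covers G S u u'"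
      unfolding cox_interval_def by auto
    have une': "u \<noteq> u'" and nb: "\<not> (\<exists>z. less u z \<and> less z u')"
      using cov unfolding cox_covers_def cox_less_def by auto
    note A = le_char[OF uu']
    define J where "J = sup u'"
    define q where "q = quot I u'"
    have u'c: "u' \<in> carrier G" using A by simp
    have JS: "J \<subseteq> S" using sup_sub[OF u'c] J_def by simp
    have IJ: "I \<subseteq> J" using A(7) I_def J_def by simp
    have qX: "q \<in> X I" and u'q: "u' = q \<otimes> u" using A I_def q_def by auto
    have qc: "q \<in> carrier G" using qX X_iff by auto
    have qne: "q \<noteq> \<one>" using u'q une' uc by auto
    obtain s where s: "s \<in> sup q" "len (q \<otimes> s) < len q" using desc_ex[OF qc qne] by blast
    have sJ: "s \<in> J" using s(1) A(6) I_def J_def q_def by auto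
    have sS: "s \<in> S" using sJ JS by auto
    note PJ = comp_props[OF JS vc]
    have cJ: "comp J v = u'" using u'v J_def unfolding cox_le_def by simp
    define vJ where "vJ = quot J v"
    have vJc: "vJ \<in> carrier G" using PJ(2) X_iff vJ_def by auto
    have "x \<otimes> u = vJ \<otimes> q \<otimes> u" using vxu PJ(3) cJ u'q vJ_def vJc qc uc by (simp add: m_assoc)
    then have xq: "x = vJ \<otimes> q" using xc vJc qc uc by simp
    have qJ: "q \<in> par J"
    proof -
      have "u' \<otimes> inv u = q" using u'q qc uc by (simp add: m_assoc)
      moreover have "u \<in> par J" using in_par_sup[OF uc] par_mono[OF IJ] I_def by auto
      moreover have "u' \<in> par J" using in_par_sup[OF u'c] J_def by simp
      ultimately show ?thesis using par_mult[OF JS _ par_inverse[OF JS]] by metis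
    qed
    have qsJ: "q \<otimes> s \<in> par J" using par_mult[OF JS qJ par_gen[OF JS sJ]] .
    have "len (x \<otimes> s) = len (vJ \<otimes> (q \<otimes> s))" using xq vJc qc sS by (simp add: m_assoc)
    also have "\<dots> = len vJ + len (q \<otimes> s)" using X_additive[OF JS _ qsJ] PJ(2) vJ_def by simp
    also have "\<dots> < len vJ + len q" using s(2) by simp
    also have "\<dots> = len x" using X_additive[OF JS _ qJ] PJ(2) vJ_def xq by simp
    finally have sD: "s \<in> D" using sS unfolding D_def cox_descents_def by simp
    note F = fprops[OF sD]
    have KJ: "I \<union> {s} \<subseteq> J" using IJ sJ by auto
    have "comp (sup (f s)) u' = f s"
      using F comp_comp[OF JS KJ vc] cJ f_def by simp
    moreover have "f s \<in> carrier G" using F le_char(2)[of u "f s"] by blast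
    ultimately have fu': "le (f s) u'" unfolding cox_le_def using u'c F by simp
    have "f s = u'"
    proof (rule ccontr)
      assume "f s \<noteq> u'"
      then have "less (f s) u'" using fu' unfolding cox_less_def by simp
      then show False using nb F by blast
    qed
    then show "u' \<in> f ` D" using sD by blast
  next
    fix u' assume "u' \<in> f ` D"
    then obtain s where sD: "s \<in> D" and u': "u' = f s" by blast
    note F = fprops[OF sD]
    show "u' \<in> {u' \<in> cox_interval G S u v. cox_covers G S u u'}"
      using F u' unfolding cox_interval_def cox_covers_def by auto
  qed
  have "inj_on f D"
  proof (rule inj_onI)
    fix s s' assume "s \<in> D" "s' \<in> D" "f s = f s'"
    then show "s = s'" using fprops[of s] fprops[of s'] by auto
  qed
  then have "card (f ` D) = card D" by (rule card_image)
  then show ?thesis using covset D_def x_def I_def by simp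
qed

end

theorem mainTheorem11:
  fixes G :: "('a, 'b) monoid_scheme" and S :: "'a set" and u v :: 'a
  assumes "coxeter_system G S" and "finite S"
    and "cox_less G S u v"
  shows "card {u' \<in> cox_interval G S u v. cox_covers G S u u'}
         = card (cox_descents G S (par_quot G S (cox_support G S u) v))"
proof -
  interpret cox G S using cox_from_sys[OF assms(1)] .
  show ?thesis using main_in_locale[OF assms(3)] .
qed

end
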